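(* Let $k$ be a positive integer and let $\mathcal A$ be an incremental clustering algorithm which, given $k$ and the points of a finite distance space $(\mathcal X,d)$ in some order, maintains (and finally outputs) a list of $\ell$ centers chosen from the points seen so far. Suppose that for every finite distance space $(\mathcal X,d)$, every ordering of $\mathcal X$, and every nice $k$-clustering $\mathcal C$ of $\mathcal X$, the final list of centers induces a refinement of $\mathcal C$. Then $\ell\ge 2^{k-1}$.
   Context: A distance space $(\mathcal X,d)$ is a set with a symmetric function $d:\mathcal X\times\mathcal X\to\mathbb R_{\ge0}$ with $d(x,x)=0$. A clustering of $\mathcal X$ is a set of nonempty, pairwise disjoint subsets whose union is $\mathcal X$; a $k$-clustering has exactly $k$ clusters. Write $x\sim_{\mathcal C}y$ if $x,y$ are in the same cluster and $x\not\sim_{\mathcal C}y$ otherwise. $\mathcal C$ is nice if for all $x,y,z\in\mathcal X$: $d(y,x)<d(z,x)$ whenever $x\sim_{\mathcal C}y$ and $x\not\sim_{\mathcal C}z$. A list $T=(t_1,\ldots,t_m)$ induces the clustering of $\mathcal X$ in which each $x$ is assigned to the index $i$ minimizing $d(x,t_i)$ (ties broken by smallest $i$), empty clusters discarded. A clustering $\mathcal C$ is a refinement of $\mathcal C'$ if $x\sim_{\mathcal C}y$ implies $x\sim_{\mathcal C'}y$ for all $x,y$. *)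

theory Defs
  imports Complex_Main
begin

definition distance_space :: "'a set \<Rightarrow> ('a \<Rightarrow> 'a \<Rightarrow> real) \<Rightarrow> bool" where
  "distance_space X d \<longleftrightarrow>
     (\<forall>x\<in>X. \<forall>y\<in>X. d x y = d y x \<and> d x y \<ge> 0) \<and> (\<forall>x\<in>X. d x x = 0)"

definition is_clustering :: "'a set \<Rightarrow> 'a set set \<Rightarrow> bool" where
  "is_clustering X C \<longleftrightarrow>
     (\<forall>c\<in>C. c \<noteq> {}) \<and> (\<forall>c\<in>C. \<forall>c'\<in>C. c \<noteq> c' \<longrightarrow> c \<inter> c' = {}) \<and> \<Union>C = X"

definition same_cluster :: "'a set set \<Rightarrow> 'a \<Rightarrow> 'a \<Rightarrow> bool" where
  "same_cluster C x y \<longleftrightarrow> (\<exists>c\<in>C. x \<in> c \<and> y \<in> c)"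

definition nice :: "'a set \<Rightarrow> ('a \<Rightarrow> 'a \<Rightarrow> real) \<Rightarrow> 'a set set \<Rightarrow> bool" where
  "nice X d C \<longleftrightarrow> (\<forall>x\<in>X. \<forall>y\<in>X. \<forall>z\<in>X.
      same_cluster C x y \<and> \<not> same_cluster C x z \<longrightarrow> d y x < d z x)"

definition nearest :: "('a \<Rightarrow> 'a \<Rightarrow> real) \<Rightarrow> 'a list \<Rightarrow> 'a \<Rightarrow> nat" where
  "nearest d T x = (LEAST i. i < length T \<and> (\<forall>j<length T. d x (T ! i) \<le> d x (T ! j)))"

definition induced :: "'a set \<Rightarrow> ('a \<Rightarrow> 'a \<Rightarrow> real) \<Rightarrow> 'a list \<Rightarrow> 'a set set" where
  "induced X d T = {c. \<exists>i<length T. c = {x\<in>X. nearest d T x = i} \<and> c \<noteq> {}}"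

definition refines :: "'a set set \<Rightarrow> 'a set set \<Rightarrow> bool" where
  "refines C C' \<longleftrightarrow> (\<forall>x y. same_cluster C x y \<longrightarrow> same_cluster C' x y)"

text \<open>An update rule upd receives k, the distance matrix of the list L = (current centers) @ [new point]
  (entries outside the range are 0) and the length m of L, and returns a list of indices into L
  selecting the new centers. It may only use distances, never point identities.\<close>
definition valid_update :: "nat \<Rightarrow> (nat \<Rightarrow> (nat \<Rightarrow> nat \<Rightarrow> real) \<Rightarrow> nat \<Rightarrow> nat list) \<Rightarrow> bool" where
  "valid_update l upd \<longleftrightarrow> (\<forall>k M m. set (upd k M m) \<subseteq> {..<m} \<and> length (upd k M m) \<le> l
       \<and> (m > 0 \<longrightarrow> upd k M m \<noteq> []))"

definition step :: "(nat \<Rightarrow> (nat \<Rightarrow> nat \<Rightarrow> real) \<Rightarrow> nat \<Rightarrow> nat list) \<Rightarrow> nat \<Rightarrow> ('a \<Rightarrow> 'a \<Rightarrow> real)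
     \<Rightarrow> 'a \<Rightarrow> 'a list \<Rightarrow> 'a list" where
  "step upd k d x T = (let L = T @ [x]; m = length L in
     map (\<lambda>i. L ! i) (upd k (\<lambda>i j. if i < m \<and> j < m then d (L ! i) (L ! j) else 0) m))"

definition run :: "(nat \<Rightarrow> (nat \<Rightarrow> nat \<Rightarrow> real) \<Rightarrow> nat \<Rightarrow> nat list) \<Rightarrow> nat \<Rightarrow> ('a \<Rightarrow> 'a \<Rightarrow> real)
     \<Rightarrow> 'a list \<Rightarrow> 'a list" where
  "run upd k d xs = fold (step upd k d) xs []"

end

theory Submission
  imports Defs "HOL-Library.Countable"
begin

fun cpl :: "bool list \<Rightarrow> bool list \<Rightarrow> nat" where
  "cpl (x#xs) (y#ys) = (if x = y then Suc (cpl xs ys) else 0)"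
| "cpl _ _ = 0"

lemma cpl_sym: "cpl a b = cpl b a"
  by (induction a b rule: cpl.induct) auto

lemma cpl_le: "cpl a b \<le> length a"
  by (induction a b rule: cpl.induct) auto

lemma cpl_self: "cpl a a = length a"
  by (induction a) auto

lemma cpl_eq: "length a = length b \<Longrightarrow> cpl a b = length a \<Longrightarrow> a = b"
  by (induction a b rule: cpl.induct) (auto split: if_splits)

lemma cpl_ultra: "min (cpl a b) (cpl b c) \<le> cpl a c"
proof (induction a arbitrary: b c)
  case Nil then show ?case by (cases b) auto
next
  case (Cons x a)
  show ?case
  proof (cases b)
    case Nil then show ?thesis by simp
  next
    case (Cons y b')
    show ?thesis
    proof (cases c)
      case Nil then show ?thesis using \<open>b = y # b'\<close> by simp
    next
      case (Cons z c')
      then show ?thesis using \<open>b = y # b'\<close> Cons.IH[of b' c'] by auto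
    qed
  qed
qed

lemma cpl_bool: "length a = length p \<Longrightarrow> length b = length p \<Longrightarrow> cpl a p = cpl b p
   \<Longrightarrow> cpl a p < length p \<Longrightarrow> cpl a p < cpl a b"
proof (induction p arbitrary: a b)
  case Nil then show ?case by simp
next
  case (Cons q p)
  then obtain x a' y b' where a: "a = x # a'" and b: "b = y # b'"
    by (cases a; cases b) auto
  show ?case using Cons.prems Cons.IH[of a' b'] unfolding a b by (auto split: if_splits)
qed

lemma cpl_wit: "i < length p \<Longrightarrow> cpl (take i p @ (\<not> p!i) # drop (Suc i) p) p = i"
proof (induction p arbitrary: i)
  case Nil then show ?case by simp
next
  case (Cons q p)
  then show ?case by (cases i) auto
qed

lemma step_props:
  assumes "valid_update l upd"
  shows "set (step upd k d x T) \<subseteq> set T \<union> {x}" "length (step upd k d x T) \<le> l"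
    "step upd k d x T \<noteq> []"
proof -
  let ?L = "T @ [x]"
  let ?M = "(\<lambda>i j. if i < length ?L \<and> j < length ?L then d (?L ! i) (?L ! j) else 0)"
  have v: "set (upd k ?M (length ?L)) \<subseteq> {..<length ?L}" "length (upd k ?M (length ?L)) \<le> l"
    "upd k ?M (length ?L) \<noteq> []"
    using assms unfolding valid_update_def by auto
  have e: "step upd k d x T = map (\<lambda>i. ?L ! i) (upd k ?M (length ?L))"
    unfolding step_def Let_def by simp
  show "set (step upd k d x T) \<subseteq> set T \<union> {x}"
  proof
    fix y assume "y \<in> set (step upd k d x T)"
    then obtain i where "i \<in> set (upd k ?M (length ?L))" "y = ?L ! i" unfolding e by auto
    with v(1) have "i < length ?L" by blast
    then have "y \<in> set ?L" using \<open>y = ?L ! i\<close> by (metis nth_mem)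
    then show "y \<in> set T \<union> {x}" by simp
  qed
  show "length (step upd k d x T) \<le> l" using v(2) e by simp
  show "step upd k d x T \<noteq> []" using v(3) e by simp
qed

lemma fold_set: "valid_update l upd \<Longrightarrow> set (fold (step upd k d) xs T) \<subseteq> set T \<union> set xs"
proof (induction xs arbitrary: T)
  case Nil then show ?case by simp
next
  case (Cons x xs)
  have "set (fold (step upd k d) xs (step upd k d x T)) \<subseteq> set (step upd k d x T) \<union> set xs"
    using Cons by blast
  moreover have "set (step upd k d x T) \<subseteq> set T \<union> {x}" by (rule step_props(1)[OF Cons.prems])
  ultimately show ?case by auto
qed

lemma run_props:
  assumes "valid_update l upd" "xs \<noteq> []"
  shows "set (run upd k d xs) \<subseteq> set xs" "length (run upd k d xs) \<le> l" "run upd k d xs \<noteq> []"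
proof -
  show "set (run upd k d xs) \<subseteq> set xs" unfolding run_def using fold_set[OF assms(1)] by fastforce
  obtain ys y where xs: "xs = ys @ [y]" using assms(2) by (cases xs rule: rev_cases) auto
  have r: "run upd k d xs = step upd k d y (fold (step upd k d) ys [])" unfolding run_def xs by simp
  show "length (run upd k d xs) \<le> l" "run upd k d xs \<noteq> []"
    unfolding r by (rule step_props(2)[OF assms(1)], rule step_props(3)[OF assms(1)])
qed

lemma nearest_props:
  fixes T :: "'a list"
  assumes "T \<noteq> []"
  shows "nearest d T x < length T \<and> (\<forall>j<length T. d x (T ! nearest d T x) \<le> d x (T ! j))"
proof -
  let ?f = "\<lambda>j. d x (T ! j)"
  let ?A = "?f ` {..<length T}"
  have fin: "finite ?A" "?A \<noteq> {}" using assms by auto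
  then have "Min ?A \<in> ?A" by (rule Min_in)
  then obtain i where i: "i < length T" "?f i = Min ?A" by auto
  have "\<forall>j<length T. ?f i \<le> ?f j" using i fin by auto
  then have "\<exists>i. i < length T \<and> (\<forall>j<length T. ?f i \<le> ?f j)" using i by blast
  then show ?thesis unfolding nearest_def by (rule LeastI_ex)
qed

lemma nearest_least:
  "i < length T \<Longrightarrow> (\<forall>j<length T. d x (T ! i) \<le> d x (T ! j)) \<Longrightarrow> nearest d T x \<le> i"
  unfolding nearest_def by (rule Least_le) simp

lemma center_included:
  assumes "T \<noteq> []" "set T \<subseteq> X" "distance_space X d"
    and pos: "\<forall>x\<in>X. \<forall>y\<in>X. d x y = 0 \<longrightarrow> x = y"
    and p: "p \<in> X" and ref: "refines (induced X d T) C"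
    and iso: "\<forall>c\<in>X. same_cluster C p c \<longrightarrow> c = p"
  shows "p \<in> set T"
proof (rule ccontr)
  assume np: "p \<notin> set T"
  define i where "i = nearest d T p"
  have hi: "i < length T" "\<forall>j<length T. d p (T ! i) \<le> d p (T ! j)"
    using nearest_props[OF assms(1)] unfolding i_def by auto
  define c where "c = T ! i"
  have cX: "c \<in> X" using hi assms(2) unfolding c_def by auto
  have cp: "c \<noteq> p" using np hi unfolding c_def by auto
  define j where "j = nearest d T c"
  have hj: "j < length T" "\<forall>m<length T. d c (T ! j) \<le> d c (T ! m)"
    using nearest_props[OF assms(1)] unfolding j_def by auto
  have dcc: "d c c = 0" using assms(3) cX unfolding distance_space_def by auto
  have tjX: "T ! j \<in> X" using hj assms(2) by auto
  have "d c (T ! j) \<le> 0" using hj(2)[rule_format, OF hi(1)] dcc unfolding c_def by simp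
  moreover have "d c (T ! j) \<ge> 0" using assms(3) cX tjX unfolding distance_space_def by auto
  ultimately have "d c (T ! j) = 0" by simp
  then have tj: "T ! j = c" using pos cX tjX by blast
  have "i \<le> j" unfolding i_def by (rule nearest_least[OF hj(1)]) (use hi(2) tj[unfolded c_def] in metis)
  moreover have "j \<le> i" unfolding j_def
  proof (rule nearest_least[OF hi(1)], intro allI impI)
    fix m assume "m < length T"
    then have "T ! m \<in> X" using assms(2) by auto
    then have "0 \<le> d c (T ! m)" using assms(3) cX unfolding distance_space_def by blast
    then show "d c (T ! i) \<le> d c (T ! m)" using dcc unfolding c_def[symmetric] by simp
  qed
  ultimately have ij: "i = j" by simp
  let ?cell = "{x\<in>X. nearest d T x = i}"
  have "nearest d T p = i" unfolding i_def ..
  then have pc: "p \<in> ?cell" using p by blast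
  have "nearest d T c = i" using ij unfolding j_def by simp
  then have "c \<in> ?cell" using cX by blast
  note pc this
  moreover have "?cell \<in> induced X d T" unfolding induced_def mem_Collect_eq
    using hi(1) pc by (intro exI[of _ i]) auto
  ultimately have "same_cluster (induced X d T) p c" unfolding same_cluster_def by (intro bexI conjI)
  then have "same_cluster C p c" using ref unfolding refines_def by blast
  then show False using iso cX cp by blast
qed

lemma nice_lists:
  assumes "length a = n" "length b = n" "length c = n" "length q = n"
    and "cpl a q = cpl b q" "cpl c q \<noteq> cpl a q"
  shows "cpl c a < cpl b a"
proof -
  have u1: "min (cpl c q) (cpl q a) \<le> cpl c a" by (rule cpl_ultra)
  have u2: "min (cpl c a) (cpl a q) \<le> cpl c q" by (rule cpl_ultra)
  have u3: "min (cpl a c) (cpl c q) \<le> cpl a q" by (rule cpl_ultra)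
  have s: "cpl q a = cpl a q" "cpl a c = cpl c a" "cpl b a = cpl a b" by (simp_all add: cpl_sym)
  have le: "cpl a q \<le> n" "cpl c q \<le> n" using cpl_le assms by metis+
  have m: "cpl c a \<le> min (cpl a q) (cpl c q)" using u2 u3 s assms(6) by linarith
  show ?thesis
  proof (cases "cpl a q < n")
    case True
    then have "cpl a q < cpl a b" using cpl_bool[of a q b] assms by simp
    then show ?thesis using m s by linarith
  next
    case False
    then have "cpl a q = n" using le by simp
    then have "a = q" "b = q" using cpl_eq assms by metis+
    then have "cpl b a = n" using cpl_self assms by simp
    then show ?thesis using m le assms(6) by linarith
  qed
qed

lemma construction:
  fixes n :: nat
  defines "X \<equiv> (to_nat::bool list \<Rightarrow> nat) ` {xs. length xs = n}"
    and "d \<equiv> \<lambda>x y::nat. real n - real (cpl (from_nat x) (from_nat y))"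
  shows "finite X" "card X = 2 ^ n" "distance_space X d"
    "\<forall>x\<in>X. \<forall>y\<in>X. d x y = 0 \<longrightarrow> x = y"
    "\<forall>p\<in>X. \<exists>C. is_clustering X C \<and> card C = Suc n \<and> nice X d C
        \<and> (\<forall>c\<in>X. same_cluster C p c \<longrightarrow> c = p)"
proof -
  let ?S = "{xs::bool list. length xs = n}"
  let ?g = "from_nat :: nat \<Rightarrow> bool list"
  have Seq: "?S = {xs. set xs \<subseteq> (UNIV::bool set) \<and> length xs = n}" by blast
  have fb: "finite (UNIV::bool set)" by (rule finite)
  have finS: "finite ?S" unfolding Seq by (rule finite_lists_length_eq[OF fb])
  have cardS: "card ?S = 2 ^ n" unfolding Seq card_lists_length_eq[OF fb] card_UNIV_bool ..
  have inj: "inj (to_nat :: bool list \<Rightarrow> nat)" by (rule inj_to_nat)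
  show "finite X" unfolding X_def using finS by simp
  show "card X = 2 ^ n" unfolding X_def using cardS card_image[OF inj_on_subset[OF inj]] by simp
  have gX: "\<And>x. x \<in> X \<Longrightarrow> length (?g x) = n \<and> to_nat (?g x) = x"
    unfolding X_def by auto
  have gS: "\<And>w. length w = n \<Longrightarrow> to_nat w \<in> X \<and> ?g (to_nat w) = w"
    unfolding X_def by auto
  show "distance_space X d" unfolding distance_space_def d_def
    using gX cpl_sym cpl_le cpl_self by (auto simp: cpl_sym)
  show "\<forall>x\<in>X. \<forall>y\<in>X. d x y = 0 \<longrightarrow> x = y"
  proof (intro ballI impI)
    fix x y assume xy: "x \<in> X" "y \<in> X" "d x y = 0"
    then have "cpl (?g x) (?g y) = length (?g x)" using gX unfolding d_def by simp
    then have "?g x = ?g y" using cpl_eq gX xy by metis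
    then show "x = y" using gX xy by metis
  qed
  show "\<forall>p\<in>X. \<exists>C. is_clustering X C \<and> card C = Suc n \<and> nice X d C
        \<and> (\<forall>c\<in>X. same_cluster C p c \<longrightarrow> c = p)"
  proof
    fix p assume p: "p \<in> X"
    define A where "A = (\<lambda>i. {x\<in>X. cpl (?g x) (?g p) = i})"
    define C where "C = A ` {0..n}"
    have cplle: "\<And>x. x \<in> X \<Longrightarrow> cpl (?g x) (?g p) \<le> n" using gX cpl_le by metis
    have ne: "\<And>i. i \<le> n \<Longrightarrow> A i \<noteq> {}"
    proof -
      fix i assume i: "i \<le> n"
      show "A i \<noteq> {}"
      proof (cases "i = n")
        case True
        have "cpl (?g p) (?g p) = length (?g p)" by (rule cpl_self)
        then have "cpl (?g p) (?g p) = n" using gX[OF p] by simp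
        then have "p \<in> A i" unfolding A_def using p True by simp
        then show ?thesis by blast
      next
        case False
        let ?q = "?g p"
        define w where "w = take i ?q @ (\<not> ?q!i) # drop (Suc i) ?q"
        have lq: "length ?q = n" using gX p by blast
        have iq: "i < length ?q" using lq i False by simp
        have lw: "length w = n" unfolding w_def using iq lq by simp
        have "cpl w ?q = i" unfolding w_def using cpl_wit[OF iq] .
        then have "to_nat w \<in> A i" unfolding A_def using gS[OF lw] by simp
        then show ?thesis by blast
      qed
    qed
    have sc: "\<And>x y. x \<in> X \<Longrightarrow> y \<in> X \<Longrightarrow>
        same_cluster C x y \<longleftrightarrow> cpl (?g x) (?g p) = cpl (?g y) (?g p)"
    proof -
      fix x y assume xy: "x \<in> X" "y \<in> X"
      show "same_cluster C x y \<longleftrightarrow> cpl (?g x) (?g p) = cpl (?g y) (?g p)"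
      proof
        assume "same_cluster C x y"
        then show "cpl (?g x) (?g p) = cpl (?g y) (?g p)"
          unfolding same_cluster_def C_def A_def by auto
      next
        assume e: "cpl (?g x) (?g p) = cpl (?g y) (?g p)"
        have "A (cpl (?g x) (?g p)) \<in> C" unfolding C_def using cplle[OF xy(1)] by simp
        moreover have "x \<in> A (cpl (?g x) (?g p))" "y \<in> A (cpl (?g x) (?g p))"
          unfolding A_def using xy e by auto
        ultimately show "same_cluster C x y" unfolding same_cluster_def by blast
      qed
    qed
    have clus: "is_clustering X C"
      unfolding is_clustering_def
    proof (intro conjI ballI impI)
      fix c assume "c \<in> C" then show "c \<noteq> {}" unfolding C_def using ne by auto
    next
      fix c c' assume "c \<in> C" "c' \<in> C" "c \<noteq> c'"
      then show "c \<inter> c' = {}" unfolding C_def A_def by auto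
    next
      show "\<Union>C = X"
      proof
        show "\<Union>C \<subseteq> X" unfolding C_def A_def by auto
        show "X \<subseteq> \<Union>C"
        proof
          fix x assume x: "x \<in> X"
          then have "x \<in> A (cpl (?g x) (?g p))" "A (cpl (?g x) (?g p)) \<in> C"
            unfolding C_def A_def using cplle[OF x] by auto
          then show "x \<in> \<Union>C" by blast
        qed
      qed
    qed
    have injA: "inj_on A {0..n}"
    proof (rule inj_onI)
      fix i j assume ij: "i \<in> {0..n}" "j \<in> {0..n}" "A i = A j"
      then obtain x where "x \<in> A i" using ne by fastforce
      then have "x \<in> A j" using ij by simp
      then show "i = j" using \<open>x \<in> A i\<close> unfolding A_def by simp
    qed
    have card: "card C = Suc n" unfolding C_def using card_image[OF injA] by simp
    have nice: "nice X d C" unfolding nice_def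
    proof (intro ballI impI)
      fix x y z assume xyz: "x \<in> X" "y \<in> X" "z \<in> X"
        and h: "same_cluster C x y \<and> \<not> same_cluster C x z"
      then have e1: "cpl (?g x) (?g p) = cpl (?g y) (?g p)"
        and e2: "cpl (?g z) (?g p) \<noteq> cpl (?g x) (?g p)" using sc by auto
      have "cpl (?g z) (?g x) < cpl (?g y) (?g x)"
        by (rule nice_lists[OF _ _ _ _ e1 e2]) (use gX xyz p in auto)
      then show "d y x < d z x" unfolding d_def by simp
    qed
    have iso: "\<forall>c\<in>X. same_cluster C p c \<longrightarrow> c = p"
    proof (intro ballI impI)
      fix c assume c: "c \<in> X" "same_cluster C p c"
      then have "cpl (?g c) (?g p) = cpl (?g p) (?g p)" using sc p by auto
      then have "cpl (?g c) (?g p) = length (?g c)" using cpl_self gX c p by metis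
      then have "?g c = ?g p" using cpl_eq gX c p by metis
      then show "c = p" using gX c p by metis
    qed
    show "\<exists>C. is_clustering X C \<and> card C = Suc n \<and> nice X d C
        \<and> (\<forall>c\<in>X. same_cluster C p c \<longrightarrow> c = p)"
      using clus card nice iso by blast
  qed
qed

theorem mainTheorem9:
  fixes upd :: "nat \<Rightarrow> (nat \<Rightarrow> nat \<Rightarrow> real) \<Rightarrow> nat \<Rightarrow> nat list" and k l :: nat
  assumes "k \<ge> 1"
    and "valid_update l upd"
    and "\<forall>(X::nat set) d xs C. finite X \<longrightarrow> distance_space X d \<longrightarrow> distinct xs \<longrightarrow> set xs = X
           \<longrightarrow> is_clustering X C \<longrightarrow> card C = k \<longrightarrow> nice X d C
           \<longrightarrow> refines (induced X d (run upd k d xs)) C"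
  shows "l \<ge> 2 ^ (k - 1)"
proof -
  define n where "n = k - 1"
  have kn: "k = Suc n" using assms(1) unfolding n_def by simp
  define X where "X = (to_nat::bool list \<Rightarrow> nat) ` {xs. length xs = n}"
  define d where "d = (\<lambda>x y::nat. real n - real (cpl (from_nat x) (from_nat y)))"
  note cons = construction[of n, folded X_def d_def]
  have pos: "\<forall>x\<in>X. \<forall>y\<in>X. d x y = 0 \<longrightarrow> x = y" using cons(4) unfolding d_def by simp
  define xs where "xs = sorted_list_of_set X"
  have xs: "distinct xs" "set xs = X" using cons(1) unfolding xs_def by auto
  have "card X > 0" using cons(2) by simp
  then have "X \<noteq> {}" by auto
  then have xsne: "xs \<noteq> []" using xs by auto
  define T where "T = run upd k d xs"
  have TX: "set T \<subseteq> X" "length T \<le> l" "T \<noteq> []"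
    using run_props[OF assms(2) xsne] xs unfolding T_def by auto
  have sub: "X \<subseteq> set T"
  proof
    fix p assume p: "p \<in> X"
    then obtain C where C: "is_clustering X C" "card C = Suc n" "nice X d C"
      "\<forall>c\<in>X. same_cluster C p c \<longrightarrow> c = p" using cons(5) by blast
    have "refines (induced X d T) C"
      using assms(3) cons(1) cons(3) xs C(1-3) kn unfolding T_def by blast
    then show "p \<in> set T"
      using center_included[OF TX(3) TX(1) cons(3) pos p _ C(4)] by blast
  qed
  have "card X \<le> card (set T)" by (rule card_mono[OF _ sub]) simp
  also have "\<dots> \<le> length T" by (rule card_length)
  finally show ?thesis using TX(2) cons(2) unfolding n_def by simp
qed

end
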